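(* Let $X$ be a spectrally negative Lévy process with scale function $W$ (as in the context). Let $\omega$ be a nonnegative locally bounded measurable function on $\mathbb{R}$, fix $u\in\mathbb{R}$ and put $\omega_u(z):=\omega(u-z)$. Let $W^{(\omega)}$ and $W^{(\omega_u)}$ be the $\omega$-scale function and the $\omega_u$-scale function respectively, i.e. the unique locally bounded solutions of \[ W^{(\omega)}(x,y)=W(x-y)+\int_y^xW(x-z)\omega(z)W^{(\omega)}(z,y)dz,\qquad W^{(\omega_u)}(x,y)=W(x-y)+\int_y^xW(x-z)\omega(u-z)W^{(\omega_u)}(z,y)dz \] for $x,y\in\mathbb{R}$. Then $W^{(\omega_u)}(u-y,u-x)=W^{(\omega)}(x,y)$ for all $x,y\in\mathbb{R}$.
   Context: $X$ is a spectrally negative Lévy process with Laplace exponent $\psi(\lambda)=\log\mathbb{E}e^{\lambda X_1}$; its scale function $W:\mathbb{R}\to[0,\infty)$ satisfies $W(x)=0$ for $x<0$, is increasing on $[0,\infty)$, and $\int_0^\infty e^{-\lambda x}W(x)dx=1/\psi(\lambda)$ for $\lambda$ large enough. It is known that, for nonnegative locally bounded measurable $\varpi$, the unique locally bounded solution $W^{(\varpi)}$ of $W^{(\varpi)}(x,y)=W(x-y)+\int_y^xW(x-z)\varpi(z)W^{(\varpi)}(z,y)dz$ is also the unique locally bounded solution of $W^{(\varpi)}(x,y)=W(x-y)+\int_y^xW^{(\varpi)}(x,z)\varpi(z)W(z-y)dz$. *)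

theory Defs
  imports "HOL-Analysis.Analysis"
begin

text \<open>Laplace exponent of a spectrally negative Levy process, via the Levy-Khintchine
  formula: drift gamma, Gaussian coefficient sigma, Levy measure Pi carried by (-inf,0)
  with finite integral of min 1 x^2; processes with monotone (decreasing) paths are
  excluded (bounded variation with nonpositive drift).\<close>
definition snlp_laplace_exponent :: "(real \<Rightarrow> real) \<Rightarrow> bool" where
  "snlp_laplace_exponent \<psi> \<longleftrightarrow>
     (\<exists>(\<gamma>::real) (\<sigma>::real) (\<nu>::real measure).
        sets \<nu> = sets borel \<and>
        emeasure \<nu> {0..} = 0 \<and>
        (\<integral>\<^sup>+ x. ennreal (min 1 (x\<^sup>2)) \<partial>\<nu>) < \<infinity> \<and>
        \<not> (\<sigma> = 0 \<and>
            (\<integral>\<^sup>+ x. ennreal (indicator {-1<..<0} x * \<bar>x\<bar>) \<partial>\<nu>) < \<infinity> \<and>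
            \<gamma> + (\<integral> x. indicator {-1<..<0} x * \<bar>x\<bar> \<partial>\<nu>) \<le> 0) \<and>
        (\<forall>s\<ge>0. \<psi> s = \<gamma> * s + \<sigma>\<^sup>2 / 2 * s\<^sup>2
              + (\<integral> x. exp (s * x) - 1 - s * x * indicator {-1<..} x \<partial>\<nu>)))"

definition scale_function :: "(real \<Rightarrow> real) \<Rightarrow> (real \<Rightarrow> real) \<Rightarrow> bool" where
  "scale_function \<psi> W \<longleftrightarrow>
     (\<forall>x. 0 \<le> W x) \<and> (\<forall>x<0. W x = 0) \<and> mono_on {0..} W \<and>
     (\<exists>s0. \<forall>s>s0. ((\<lambda>x. exp (- s * x) * W x) has_integral 1 / \<psi> s) {0..})"

definition locally_bounded :: "('a::metric_space \<Rightarrow> real) \<Rightarrow> bool" where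
  "locally_bounded f \<longleftrightarrow> (\<forall>K. compact K \<longrightarrow> bounded (f ` K))"

definition omega_scale_solution ::
  "(real \<Rightarrow> real) \<Rightarrow> (real \<Rightarrow> real) \<Rightarrow> (real \<Rightarrow> real \<Rightarrow> real) \<Rightarrow> bool" where
  "omega_scale_solution W v Wv \<longleftrightarrow>
     locally_bounded (\<lambda>(x, y). Wv x y) \<and>
     (\<forall>y. (\<lambda>x. Wv x y) \<in> borel_measurable borel) \<and>
     (\<forall>x y. Wv x y = W (x - y) + (LINT z:{y..x}|lborel. W (x - z) * v z * Wv z y))"

end

theory Submission
  imports Defs "HOL-Analysis.Analysis"
begin

lemma int_box:
  fixes g :: "real \<Rightarrow> real"
  assumes [measurable]: "g \<in> borel_measurable borel" and b: "\<forall>z\<in>{a..b}. \<bar>g z\<bar> \<le> C"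
  shows "integrable lborel (\<lambda>z. indicator {a..b} z * g z)"
proof -
  have 1: "integrable lborel (\<lambda>z. C * indicator {a..b} z :: real)" by (simp add: emeasure_lborel_Icc_eq)
  have 2: "(\<lambda>z. indicator {a..b} z * g z) \<in> borel_measurable lborel" by measurable
  have 3: "AE x in lborel. norm (indicator {a..b} x * g x) \<le> norm (C * indicator {a..b} x :: real)"
    proof (rule AE_I2)
    fix x show "norm (indicator {a..b} x * g x) \<le> norm (C * indicator {a..b} x :: real)"
    proof (cases "x \<in> {a..b}")
      case True then have "\<bar>g x\<bar> \<le> C" using b by blast
      then show ?thesis using True abs_ge_self[of C] by (simp add: indicator_def)
    next
      case False then show ?thesis by (auto simp add: indicator_def)
    qed
  qed
  show ?thesis using Bochner_Integration.integrable_bound[OF 1 2 3] .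
qed

lemma int_box2:
  fixes F :: "real \<times> real \<Rightarrow> real"
  assumes [measurable]: "F \<in> borel_measurable (lborel \<Otimes>\<^sub>M lborel)"
    and b: "\<And>p. \<bar>F p\<bar> \<le> C * indicator ({a..b} \<times> {a..b}) p"
  shows "integrable (lborel \<Otimes>\<^sub>M lborel) F"
proof -
  have "emeasure (lborel \<Otimes>\<^sub>M lborel) ({a..b} \<times> {a..b}) < \<infinity>"
    by (simp add: lborel.emeasure_pair_measure_Times ennreal_mult_less_top emeasure_lborel_Icc_eq)
  then have 1: "integrable (lborel \<Otimes>\<^sub>M lborel) (\<lambda>p. C * indicator ({a..b} \<times> {a..b}) p :: real)"
    by (intro integrable_mult_right integrable_real_indicator) auto
  have 3: "AE x in lborel \<Otimes>\<^sub>M lborel. norm (F x) \<le> norm (C * indicator ({a..b} \<times> {a..b}) x :: real)"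
    proof (rule AE_I2)
    fix x show "norm (F x) \<le> norm (C * indicator ({a..b} \<times> {a..b}) x :: real)"
      using b[of x] abs_ge_self[of "C * indicator ({a..b} \<times> {a..b}) x"] unfolding real_norm_def by linarith
  qed
  show ?thesis by (rule Bochner_Integration.integrable_bound[OF 1 _ 3]) measurable
qed

lemma refl_int:
  fixes f :: "real \<Rightarrow> real"
  shows "(LINT r:{a..b}|lborel. f r) = (LINT t:{u-b..u-a}|lborel. f (u - t))"
proof -
  have "(LINT r:{a..b}|lborel. f r) = (\<integral>r. indicator {a..b} r * f r \<partial>lborel)"
    by (simp add: set_lebesgue_integral_def)
  also have "\<dots> = \<bar>-1\<bar> *\<^sub>R (\<integral>t. indicator {a..b} (u + -1 * t) * f (u + -1 * t) \<partial>lborel)"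
    by (rule lborel_integral_real_affine) simp
  also have "\<dots> = (\<integral>t. indicator {u-b..u-a} t * f (u - t) \<partial>lborel)"
    by (simp, intro Bochner_Integration.integral_cong) (auto simp: indicator_def)
  finally show ?thesis by (simp add: set_lebesgue_integral_def)
qed

lemma key:
  fixes A B K w :: "real \<Rightarrow> real" and x y M :: real
  assumes [measurable]: "A \<in> borel_measurable borel" "B \<in> borel_measurable borel"
      "K \<in> borel_measurable borel" "w \<in> borel_measurable borel"
    and yx: "y \<le> x" and M0: "0 \<le> M"
    and bA: "\<forall>s\<in>{y..x}. \<bar>A s\<bar> \<le> M" and bB: "\<forall>s\<in>{y..x}. \<bar>B s\<bar> \<le> M"
    and bw: "\<forall>s\<in>{y..x}. \<bar>w s\<bar> \<le> M" and bK: "\<forall>t\<in>{0..x-y}. \<bar>K t\<bar> \<le> M"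
    and eqA: "\<forall>s\<in>{y..x}. A s = K (s - y) + (LINT r:{y..s}|lborel. K (s - r) * w r * A r)"
    and eqB: "\<forall>z\<in>{y..x}. B z = K (x - z) + (LINT r:{z..x}|lborel. B r * w r * K (r - z))"
  shows "A x = B y"
proof -
  define F where "F z s = indicator {y..x} z * indicator {y..z} s * (B z * w z * K (z - s) * w s * A s)" for z s
  have bF: "\<bar>F z s\<bar> \<le> M^5 * indicator ({y..x} \<times> {y..x}) (z, s)" for z s
  proof (cases "z \<in> {y..x} \<and> s \<in> {y..z}")
    case True
    then have "\<bar>B z\<bar> \<le> M" "\<bar>w z\<bar> \<le> M" "\<bar>K (z - s)\<bar> \<le> M" "\<bar>w s\<bar> \<le> M" "\<bar>A s\<bar> \<le> M"
      using bA bB bw bK by auto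
    then have "\<bar>B z * w z * K (z - s) * w s * A s\<bar> \<le> M * M * M * M * M"
      unfolding abs_mult by (intro mult_mono) auto
    then show ?thesis using True by (simp add: F_def indicator_def power_def eval_nat_numeral)
  next
    case False
    then show ?thesis using M0 by (auto simp: F_def indicator_def)
  qed
  have intF: "integrable (lborel \<Otimes>\<^sub>M lborel) (case_prod F)"
  proof (rule int_box2)
    show "\<bar>case_prod F p\<bar> \<le> M^5 * indicator ({y..x} \<times> {y..x}) p" for p
      using bF by (cases p) auto
    show "case_prod F \<in> borel_measurable (lborel \<Otimes>\<^sub>M lborel)"
    proof -
      have e: "case_prod F = (\<lambda>p. indicator {y..x} (fst p) * (if y \<le> snd p \<and> snd p \<le> fst p then 1 else 0) *
          (B (fst p) * w (fst p) * K (fst p - snd p) * w (snd p) * A (snd p)))"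
        by (auto simp: F_def indicator_def fun_eq_iff)
      have "(\<lambda>p. indicator {y..x} (fst p) * (if y \<le> snd p \<and> snd p \<le> fst p then 1 else 0) *
          (B (fst p) * w (fst p) * K (fst p - snd p) * w (snd p) * A (snd p))) \<in> borel_measurable (borel \<Otimes>\<^sub>M borel)"
        by measurable
      then show ?thesis unfolding e measurable_cong_sets[OF sets_pair_measure_cong[OF sets_lborel sets_lborel] refl] .
    qed
  qed
  have fub: "(\<integral>s. (\<integral>z. F z s \<partial>lborel) \<partial>lborel) = (\<integral>z. (\<integral>s. F z s \<partial>lborel) \<partial>lborel)"
    by (rule lborel_pair.Fubini_integral[OF intF])
  have inz: "(\<integral>s. F z s \<partial>lborel) = indicator {y..x} z * (B z * w z * (A z - K (z - y)))" for z
  proof -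
    have "(\<integral>s. F z s \<partial>lborel) = (\<integral>s. (indicator {y..x} z * (B z * w z)) * (indicator {y..z} s * (K (z - s) * w s * A s)) \<partial>lborel)"
      by (intro Bochner_Integration.integral_cong) (auto simp: F_def)
    also have "\<dots> = indicator {y..x} z * (B z * w z) * (LINT r:{y..z}|lborel. K (z - r) * w r * A r)"
      by (simp add: set_lebesgue_integral_def)
    also have "\<dots> = indicator {y..x} z * (B z * w z * (A z - K (z - y)))"
      using eqA by (cases "z \<in> {y..x}") auto
    finally show ?thesis .
  qed
  have ins: "(\<integral>z. F z s \<partial>lborel) = indicator {y..x} s * (w s * A s * (B s - K (x - s)))" for s
  proof -
    have "(\<integral>z. F z s \<partial>lborel) = (\<integral>z. (indicator {y..x} s * (w s * A s)) * (indicator {s..x} z * (B z * w z * K (z - s))) \<partial>lborel)"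
      by (intro Bochner_Integration.integral_cong) (auto simp: F_def indicator_def)
    also have "\<dots> = indicator {y..x} s * (w s * A s) * (LINT r:{s..x}|lborel. B r * w r * K (r - s))"
      by (simp add: set_lebesgue_integral_def)
    also have "\<dots> = indicator {y..x} s * (w s * A s * (B s - K (x - s)))"
      using eqB by (cases "s \<in> {y..x}") auto
    finally show ?thesis .
  qed
  have i1: "integrable lborel (\<lambda>z. indicator {y..x} z * (B z * w z * A z))"
  proof (rule int_box[where C="M*M*M"])
    show "\<forall>z\<in>{y..x}. \<bar>B z * w z * A z\<bar> \<le> M * M * M"
      using bA bB bw unfolding abs_mult by (auto intro!: mult_mono)
  qed measurable
  have i2: "integrable lborel (\<lambda>z. indicator {y..x} z * (B z * w z * K (z - y)))"
  proof (rule int_box[where C="M*M*M"])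
    show "\<forall>z\<in>{y..x}. \<bar>B z * w z * K (z - y)\<bar> \<le> M * M * M"
      using bK bB bw unfolding abs_mult by (auto intro!: mult_mono)
  qed measurable
  have i3: "integrable lborel (\<lambda>z. indicator {y..x} z * (K (x - z) * w z * A z))"
  proof (rule int_box[where C="M*M*M"])
    show "\<forall>z\<in>{y..x}. \<bar>K (x - z) * w z * A z\<bar> \<le> M * M * M"
      using bK bA bw unfolding abs_mult by (auto intro!: mult_mono)
  qed measurable
  define J where "J = (\<integral>z. indicator {y..x} z * (B z * w z * A z) \<partial>lborel)"
  have "(\<integral>z. (\<integral>s. F z s \<partial>lborel) \<partial>lborel) = (\<integral>z. indicator {y..x} z * (B z * w z * A z) - indicator {y..x} z * (B z * w z * K (z - y)) \<partial>lborel)"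
    unfolding inz by (intro Bochner_Integration.integral_cong) (auto simp: algebra_simps)
  also have "\<dots> = J - (LINT r:{y..x}|lborel. B r * w r * K (r - y))"
    unfolding J_def using i1 i2 by (simp add: set_lebesgue_integral_def)
  also have "\<dots> = J - (B y - K (x - y))"
    using eqB yx by auto
  finally have L: "(\<integral>z. (\<integral>s. F z s \<partial>lborel) \<partial>lborel) = J - (B y - K (x - y))" .
  have "(\<integral>s. (\<integral>z. F z s \<partial>lborel) \<partial>lborel) = (\<integral>z. indicator {y..x} z * (B z * w z * A z) - indicator {y..x} z * (K (x - z) * w z * A z) \<partial>lborel)"
    unfolding ins by (intro Bochner_Integration.integral_cong) (auto simp: algebra_simps)
  also have "\<dots> = J - (LINT r:{y..x}|lborel. K (x - r) * w r * A r)"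
    unfolding J_def using i1 i3 by (simp add: set_lebesgue_integral_def)
  also have "\<dots> = J - (A x - K (x - y))"
    using eqA yx by auto
  finally have R: "(\<integral>s. (\<integral>z. F z s \<partial>lborel) \<partial>lborel) = J - (A x - K (x - y))" .
  show ?thesis using fub L R by simp
qed

lemma lb_obtain:
  assumes "locally_bounded f" "compact S"
  obtains M where "\<forall>p\<in>S. \<bar>f p\<bar> \<le> M"
  using assms unfolding locally_bounded_def bounded_iff by fastforce

theorem lemma2:
  fixes \<psi> W \<omega> :: "real \<Rightarrow> real" and u :: real and W\<omega> W\<omega>u :: "real \<Rightarrow> real \<Rightarrow> real"
  assumes "snlp_laplace_exponent \<psi>"
    and "scale_function \<psi> W"
    and "\<forall>z. 0 \<le> \<omega> z" and "locally_bounded \<omega>" and "\<omega> \<in> borel_measurable borel"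
    and "omega_scale_solution W \<omega> W\<omega>"
    and "omega_scale_solution W (\<lambda>z. \<omega> (u - z)) W\<omega>u"
  shows "\<forall>x y. W\<omega>u (u - y) (u - x) = W\<omega> x y"
proof (intro allI)
  fix x y :: real
  have W0: "\<forall>t. 0 \<le> W t" and Wneg: "\<forall>t<0. W t = 0" and Wmono: "mono_on {0..} W"
    using assms(2) unfolding scale_function_def by auto
  have lbA: "locally_bounded (\<lambda>(a, b). W\<omega> a b)" and mA: "\<forall>b. (\<lambda>a. W\<omega> a b) \<in> borel_measurable borel"
    and eA: "\<forall>a b. W\<omega> a b = W (a - b) + (LINT z:{b..a}|lborel. W (a - z) * \<omega> z * W\<omega> z b)"
    using assms(6) unfolding omega_scale_solution_def by blast+
  have lbB: "locally_bounded (\<lambda>(a, b). W\<omega>u a b)" and mB: "\<forall>b. (\<lambda>a. W\<omega>u a b) \<in> borel_measurable borel"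
    and eB: "\<forall>a b. W\<omega>u a b = W (a - b) + (LINT z:{b..a}|lborel. W (a - z) * \<omega> (u - z) * W\<omega>u z b)"
    using assms(7) unfolding omega_scale_solution_def by blast+
  show "W\<omega>u (u - y) (u - x) = W\<omega> x y"
  proof (cases "y \<le> x")
    case False
    then have e1: "{y..x} = {}" "{u-x..u-y} = {}" by auto
    have i1: "(LINT z:{y..x}|lborel. W (x - z) * \<omega> z * W\<omega> z y) = 0"
      unfolding e1 by (simp add: set_lebesgue_integral_def)
    have i2: "(LINT z:{u - x..u - y}|lborel. W (u - y - z) * \<omega> (u - z) * W\<omega>u z (u - x)) = 0"
      unfolding e1 by (simp add: set_lebesgue_integral_def)
    have "W\<omega> x y = W (x - y) + (LINT z:{y..x}|lborel. W (x - z) * \<omega> z * W\<omega> z y)"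
      using eA by blast
    moreover have "W\<omega>u (u - y) (u - x) = W (u - y - (u - x)) + (LINT z:{u - x..u - y}|lborel. W (u - y - z) * \<omega> (u - z) * W\<omega>u z (u - x))"
      using eB by blast
    ultimately show ?thesis using i1 i2 by simp
  next
    case yx: True
    have monoW: "mono W"
    proof (rule monoI)
      fix a b :: real assume ab: "a \<le> b"
      show "W a \<le> W b"
      proof (cases "a < 0")
        case True then show ?thesis using W0 Wneg by simp
      next
        case False then show ?thesis using ab Wmono by (auto intro: mono_onD)
      qed
    qed
    have [measurable]: "W \<in> borel_measurable borel" using monoW by (rule borel_measurable_mono)
    have [measurable]: "\<omega> \<in> borel_measurable borel" by fact
    have [measurable]: "(\<lambda>s. W\<omega> s y) \<in> borel_measurable borel" using mA by auto
    have mB1: "(\<lambda>a. W\<omega>u a (u - x)) \<in> borel_measurable borel" using mB by auto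
    have [measurable]: "(\<lambda>z. W\<omega>u (u - z) (u - x)) \<in> borel_measurable borel"
      by (rule measurable_compose[OF _ mB1]) measurable
    obtain M1 where M1: "\<forall>p\<in>{y..x} \<times> {y}. \<bar>(\<lambda>(a, b). W\<omega> a b) p\<bar> \<le> M1"
      using lb_obtain[OF lbA compact_Times[OF compact_Icc compact_sing]] by blast
    obtain M2 where M2: "\<forall>p\<in>{u-x..u-y} \<times> {u-x}. \<bar>(\<lambda>(a, b). W\<omega>u a b) p\<bar> \<le> M2"
      using lb_obtain[OF lbB compact_Times[OF compact_Icc compact_sing]] by blast
    obtain M3 where M3: "\<forall>p\<in>{y..x}. \<bar>\<omega> p\<bar> \<le> M3"
      using lb_obtain[OF assms(4) compact_Icc] by blast
    define M where "M = max (max M1 M2) (max M3 (max 0 (W (x - y))))"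
    show ?thesis
    proof (rule key[where A="\<lambda>s. W\<omega> s y" and B="\<lambda>z. W\<omega>u (u - z) (u - x)" and K=W and w=\<omega> and M=M, symmetric])
      show "y \<le> x" by fact
      show "0 \<le> M" unfolding M_def by auto
      show "\<forall>s\<in>{y..x}. \<bar>W\<omega> s y\<bar> \<le> M"
      proof
        fix s assume "s \<in> {y..x}"
        then have "(s, y) \<in> {y..x} \<times> {y}" by auto
        then have "\<bar>W\<omega> s y\<bar> \<le> M1" using M1 by fastforce
        then show "\<bar>W\<omega> s y\<bar> \<le> M" unfolding M_def by linarith
      qed
      show "\<forall>s\<in>{y..x}. \<bar>W\<omega>u (u - s) (u - x)\<bar> \<le> M"
      proof
        fix s assume "s \<in> {y..x}"
        then have "(u - s, u - x) \<in> {u-x..u-y} \<times> {u-x}" by auto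
        then have "\<bar>W\<omega>u (u - s) (u - x)\<bar> \<le> M2" using M2 by fastforce
        then show "\<bar>W\<omega>u (u - s) (u - x)\<bar> \<le> M" unfolding M_def by linarith
      qed
      show "\<forall>s\<in>{y..x}. \<bar>\<omega> s\<bar> \<le> M"
        using M3 unfolding M_def by (meson max.coboundedI1 max.coboundedI2 order_trans)
      show "\<forall>t\<in>{0..x - y}. \<bar>W t\<bar> \<le> M"
      proof
        fix t assume "t \<in> {0..x - y}"
        then have "W t \<le> W (x - y)" using monoW by (auto intro: monoD)
        then show "\<bar>W t\<bar> \<le> M" using W0 unfolding M_def by (simp add: abs_of_nonneg)
      qed
      show "\<forall>s\<in>{y..x}. W\<omega> s y = W (s - y) + (LINT r:{y..s}|lborel. W (s - r) * \<omega> r * W\<omega> r y)"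
        using eA by blast
      show "\<forall>z\<in>{y..x}. W\<omega>u (u - z) (u - x) = W (x - z) + (LINT r:{z..x}|lborel. W\<omega>u (u - r) (u - x) * \<omega> r * W (r - z))"
      proof
        fix z
        have "W\<omega>u (u - z) (u - x) = W (u - z - (u - x)) + (LINT r:{u - x..u - z}|lborel. W (u - z - r) * \<omega> (u - r) * W\<omega>u r (u - x))"
          using eB by blast
        also have "(LINT r:{u - x..u - z}|lborel. W (u - z - r) * \<omega> (u - r) * W\<omega>u r (u - x))
            = (LINT t:{u - (u - z)..u - (u - x)}|lborel. W (u - z - (u - t)) * \<omega> (u - (u - t)) * W\<omega>u (u - t) (u - x))"
          by (rule refl_int)
        also have "\<dots> = (LINT r:{z..x}|lborel. W\<omega>u (u - r) (u - x) * \<omega> r * W (r - z))"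
          by (simp add: algebra_simps)
        finally show "W\<omega>u (u - z) (u - x) = W (x - z) + (LINT r:{z..x}|lborel. W\<omega>u (u - r) (u - x) * \<omega> r * W (r - z))"
          by simp
      qed
    qed measurable
  qed
qed

end
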